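(* Let $r>1$, $p\in(0,1)$, $q=1-p$, and $z>1$. Let $g_z:\mathbb{Z}_+\to\mathbb{R}$ be defined by $g_z(0)=0$ and, for $k\ge 1$, $$g_z(k)=-\sum_{j=k}^{\infty}\frac{r(r+1)\cdots(r+j-1)}{r(r+1)\cdots(r+k-1)}\,\frac{(k-1)!}{j!}\,q^{j-k}\Big[(j-z)^+-\mathbb{E}[(\mathrm{N}_{r,p}-z)^+]\Big].$$ Then for every integer $k\ge 1$, $$|\Delta g_z(k)|\le\begin{cases}\frac{1}{z}\left(2p^{-(r+1)}-p^{-1}\right) & \text{if } k\ge z,\\[2pt] \frac{1}{z}\left((1+q^{-1})p^{-(r+2)}-p^{-2}\right) & \text{if } 2\le k<z,\\[2pt] \frac{r+1}{z}\left(2p^{-(r+2)}-p^{-2}\right) & \text{if } k=1.\end{cases}$$ In particular, for all $k\ge1$, $|\Delta g_z(k)|\le \vartheta_{r,p,z}:=\frac{r+1}{z}\left((1+q^{-1})p^{-(r+2)}-p^{-2}\right)$.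
   Context: $\mathbb{Z}_+=\{0,1,2,\ldots\}$. $x^+=\max\{x,0\}$. $\mathrm{N}_{r,p}$ denotes a negative binomial random variable with $\mathbb{P}(\mathrm{N}_{r,p}=k)=\binom{r+k-1}{k}p^rq^k=\frac{\Gamma(r+k)}{k!\,\Gamma(r)}p^rq^k$ for $k\in\mathbb{Z}_+$, where $r>1$ and $q=1-p\in(0,1)$. $\Delta g(k)=g(k+1)-g(k)$ is the forward difference. *)

theory Defs
  imports "HOL-Analysis.Analysis"
begin

definition nb_pmf :: "real \<Rightarrow> real \<Rightarrow> nat \<Rightarrow> real" where
  "nb_pmf r p k = Gamma (r + real k) / (fact k * Gamma r) * p powr r * (1 - p) ^ k"

definition nb_excess :: "real \<Rightarrow> real \<Rightarrow> real \<Rightarrow> real" where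
  "nb_excess r p z = (\<Sum>j. nb_pmf r p j * max (real j - z) 0)"

definition g_term :: "real \<Rightarrow> real \<Rightarrow> real \<Rightarrow> nat \<Rightarrow> nat \<Rightarrow> real" where
  "g_term r p z k j = pochhammer r j / pochhammer r k * (fact (k - 1) / fact j)
      * (1 - p) ^ (j - k) * (max (real j - z) 0 - nb_excess r p z)"

definition g_z :: "real \<Rightarrow> real \<Rightarrow> real \<Rightarrow> nat \<Rightarrow> real" where
  "g_z r p z k = (if k = 0 then 0 else - (\<Sum>i. g_term r p z k (k + i)))"

end

theory Submission
  imports Defs
begin

lemma poch_sums:
  fixes p s :: real
  assumes "0 < p" "p < 1"
  shows "(\<lambda>n. pochhammer s n / fact n * (1-p)^n) sums (p powr (-s))"
proof -
  have "\<bar>p - 1\<bar> < 1" using assms by auto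
  from gen_binomial_real[OF this, of "-s"]
  have "(\<lambda>n. ((-s) gchoose n) * (p-1)^n) sums (1 + (p - 1)) powr (-s)" .
  moreover have "((-s) gchoose n) * (p-1)^n = pochhammer s n / fact n * (1-p)^n" for n
  proof -
    have "((-s) gchoose n) * (p-1)^n = pochhammer s n / fact n * ((-1)^n * (p-1)^n)"
      by (simp add: gbinomial_pochhammer)
    also have "(-1)^n * (p-1)^n = (1-p::real)^n"
      by (simp add: power_mult_distrib[symmetric])
    finally show ?thesis .
  qed
  ultimately show ?thesis by simp
qed

lemma pmf_eq:
  fixes r p :: real
  assumes "r > 0"
  shows "nb_pmf r p j = p powr r * (pochhammer r j / fact j * (1-p)^j)"
proof -
  have "r \<notin> \<int>\<^sub>\<le>\<^sub>0" using assms nonpos_Ints_nonpos by force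
  then have "pochhammer r j = Gamma (r + real j) / Gamma r" by (rule pochhammer_Gamma)
  then show ?thesis unfolding nb_pmf_def by (simp add: field_simps)
qed

context
  fixes r p :: real
  assumes r1: "r > 1" and p0: "0 < p" and p1: "p < 1"
begin

lemma pmf_sums: "nb_pmf r p sums 1"
proof -
  have "(\<lambda>n. p powr r * (pochhammer r n / fact n * (1-p)^n)) sums (p powr r * p powr (-r))"
    by (rule sums_mult[OF poch_sums[OF p0 p1]])
  moreover have "p powr r * p powr (-r) = 1" using p0 by (simp add: powr_minus)
  moreover have "nb_pmf r p = (\<lambda>n. p powr r * (pochhammer r n / fact n * (1-p)^n))"
    using pmf_eq[of r p] r1 by (intro ext) simp
  ultimately show ?thesis by simp
qed

lemma pmf_summable: "summable (nb_pmf r p)"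
  using pmf_sums by (simp add: sums_summable)

lemma pmf_pos: "nb_pmf r p j > 0"
  using r1 p0 p1 by (simp add: pmf_eq pochhammer_pos)

lemma pmf_rec: "real (Suc j) * nb_pmf r p (Suc j) = (r + real j) * (1-p) * nb_pmf r p j"
proof -
  have f: "fact (Suc j) = real (Suc j) * fact j" by simp
  have "real (Suc j) * nb_pmf r p (Suc j) = real (Suc j) * (p powr r * (pochhammer r j * (r + real j) / (real (Suc j) * fact j) * ((1-p)^j * (1-p))))"
    using r1 by (simp only: pmf_eq pochhammer_Suc f power_Suc2)
  also have "\<dots> = (r + real j) * (1-p) * (p powr r * (pochhammer r j / fact j * (1-p)^j))"
  proof -
    have "fact j > (0::real)" by simp
    moreover have "real (Suc j) > 0" by simp
    ultimately show ?thesis by (simp add: divide_simps)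
  qed
  finally show ?thesis using r1 by (simp add: pmf_eq)
qed

definition w :: "real \<Rightarrow> nat \<Rightarrow> real" where
  "w s i = pochhammer s i / fact i * (1-p)^i"

lemma w_sums: "w s sums (p powr (-s))"
  unfolding w_def using poch_sums[OF p0 p1] .

lemma w_summable: "summable (w s)"
  using w_sums[of s] by (rule sums_summable)

lemma w_nonneg: "s > 0 \<Longrightarrow> w s i \<ge> 0"
  unfolding w_def using p1 by (simp add: pochhammer_pos less_imp_le)

lemma w_rec: "real (Suc i) * w s (Suc i) = (s + real i) * (1-p) * w s i"
proof -
  have f: "fact (Suc i) = real (Suc i) * fact i" by simp
  have "real (Suc i) * w s (Suc i) = real (Suc i) * (pochhammer s i * (s + real i) / (real (Suc i) * fact i) * ((1-p)^i * (1-p)))"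
    by (simp only: w_def pochhammer_Suc f power_Suc2)
  also have "\<dots> = (s + real i) * (1-p) * w s i"
  proof -
    have "fact i > (0::real)" by simp
    moreover have "real (Suc i) > 0" by simp
    ultimately show ?thesis unfolding w_def by (simp add: divide_simps)
  qed
  finally show ?thesis .
qed

lemma pmf_w: "nb_pmf r p j = p powr r * w r j"
  using pmf_eq[of r p j] r1 by (simp add: w_def)

lemma pmf_mean_summable: "summable (\<lambda>j. nb_pmf r p j * real j)"
proof -
  have "(r + real i) * pochhammer r i = r * pochhammer (r+1) i" for i
    using pochhammer_rec[of r i] pochhammer_Suc[of r i] by (simp add: mult.commute)
  have eq: "nb_pmf r p (i + 1) * real (i + 1) = (1-p) * (p powr r * r) * w (r+1) i" for i
  proof -
    have "nb_pmf r p (i + 1) * real (i + 1) = (r + real i) * (1-p) * nb_pmf r p i"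
      using pmf_rec[of i] by (simp add: mult.commute)
    also have "\<dots> = (1-p) * p powr r * ((r + real i) * pochhammer r i) / fact i * (1-p)^i"
      by (simp add: pmf_w w_def)
    also have "\<dots> = (1-p) * (p powr r * r) * w (r+1) i"
      unfolding w_def \<open>(r + real i) * pochhammer r i = r * pochhammer (r+1) i\<close> by simp
    finally show ?thesis .
  qed
  have "summable (\<lambda>i. (1-p) * (p powr r * r) * w (r+1) i)"
    by (intro summable_mult w_summable)
  then have "summable (\<lambda>i. nb_pmf r p (i + 1) * real (i + 1))" by (simp only: eq)
  then show ?thesis using summable_iff_shift[of "\<lambda>j. nb_pmf r p j * real j" 1] by blast
qed

lemma B1: "nb_pmf r p (Suc k + i) * real (Suc i) \<le> nb_pmf r p (Suc k) * w (r+1) i"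
proof (induction i)
  case 0
  then show ?case by (simp add: w_def)
next
  case (Suc i)
  define a where "a = Suc k + i"
  define P where "P = nb_pmf r p a"
  define P' where "P' = nb_pmf r p (Suc a)"
  define W where "W = w (r+1) i"
  define W' where "W' = w (r+1) (Suc i)"
  have q: "1 - p > 0" using p1 by simp
  have Ppos: "P \<ge> 0" unfolding P_def using pmf_pos less_imp_le by blast
  have E1: "real (Suc a) * P' = (r + real a) * (1-p) * P" unfolding P_def P'_def by (rule pmf_rec)
  have E2: "real (Suc i) * W' = (r + 1 + real i) * (1-p) * W" unfolding W_def W'_def by (rule w_rec)
  have IH: "P * real (Suc i) \<le> nb_pmf r p (Suc k) * W" using Suc.IH unfolding P_def W_def a_def .
  have ineq: "real (Suc (Suc i)) * (r + real a) \<le> real (Suc a) * (r + 1 + real i)"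
  proof -
    have "real k * 1 \<le> real k * r" using r1 by (intro mult_left_mono) auto
    then show ?thesis unfolding a_def by (simp add: algebra_simps)
  qed
  have "(real (Suc a) * real (Suc i)) * (P' * real (Suc (Suc i)))
      = (real (Suc (Suc i)) * real (Suc i)) * (real (Suc a) * P')" by (simp only: ac_simps)
  also have "\<dots> = (real (Suc (Suc i)) * real (Suc i)) * ((r + real a) * (1-p) * P)" by (simp only: E1)
  also have "\<dots> = (real (Suc (Suc i)) * (r + real a)) * ((1-p) * real (Suc i) * P)" by (simp only: ac_simps)
  also have "\<dots> \<le> (real (Suc a) * (r + 1 + real i)) * ((1-p) * real (Suc i) * P)"
    by (rule mult_right_mono[OF ineq]) (use q Ppos in simp)
  also have "\<dots> = (real (Suc a) * (r + 1 + real i) * (1-p)) * (P * real (Suc i))"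
    by (simp add: algebra_simps)
  also have "\<dots> \<le> (real (Suc a) * (r + 1 + real i) * (1-p)) * (nb_pmf r p (Suc k) * W)"
    by (rule mult_left_mono[OF IH]) (use q r1 in simp)
  also have "\<dots> = (real (Suc a) * nb_pmf r p (Suc k)) * ((r + 1 + real i) * (1-p) * W)"
    by (simp only: ac_simps)
  also have "\<dots> = (real (Suc a) * nb_pmf r p (Suc k)) * (real (Suc i) * W')" by (simp only: E2)
  also have "\<dots> = (real (Suc a) * real (Suc i)) * (nb_pmf r p (Suc k) * W')"
    by (simp only: ac_simps)
  finally have "(real (Suc a) * real (Suc i)) * (P' * real (Suc (Suc i)))
      \<le> (real (Suc a) * real (Suc i)) * (nb_pmf r p (Suc k) * W')" .
  then have "P' * real (Suc (Suc i)) \<le> nb_pmf r p (Suc k) * W'"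
    by (rule mult_left_le_imp_le) simp
  then show ?case unfolding P'_def W'_def a_def by simp
qed

lemma B2:
  assumes k1: "k \<ge> 1"
  shows "nb_pmf r p (Suc k + i) * real (Suc k + i) * real (Suc i) \<le> real (Suc k) * nb_pmf r p (Suc k) * w (r+2) i"
proof (induction i)
  case 0
  then show ?case by (simp add: w_def)
next
  case (Suc i)
  define a where "a = Suc k + i"
  define P where "P = nb_pmf r p a"
  define P' where "P' = nb_pmf r p (Suc a)"
  define W where "W = w (r+2) i"
  define W' where "W' = w (r+2) (Suc i)"
  define C where "C = real (Suc k) * nb_pmf r p (Suc k)"
  have q: "1 - p > 0" using p1 by simp
  have Ppos: "P \<ge> 0" unfolding P_def using pmf_pos less_imp_le by blast
  have apos: "real a > 0" unfolding a_def by simp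
  have E1: "real (Suc a) * P' = (r + real a) * (1-p) * P" unfolding P_def P'_def by (rule pmf_rec)
  have E2: "real (Suc i) * W' = (r + 2 + real i) * (1-p) * W" unfolding W_def W'_def
    using w_rec[of i "r+2"] by simp
  have IH: "P * real a * real (Suc i) \<le> C * W" using Suc.IH unfolding P_def W_def a_def C_def .
  have ineq: "real (Suc (Suc i)) * (r + real a) \<le> real a * (r + 2 + real i)"
  proof -
    have "r * 1 \<le> r * real k" using r1 k1 by (intro mult_left_mono) auto
    then show ?thesis unfolding a_def by (simp add: algebra_simps)
  qed
  have "(real a * real (Suc i)) * (P' * real (Suc a) * real (Suc (Suc i)))
      = (real a * real (Suc i) * real (Suc (Suc i))) * (real (Suc a) * P')" by (simp only: ac_simps)
  also have "\<dots> = (real a * real (Suc i) * real (Suc (Suc i))) * ((r + real a) * (1-p) * P)" by (simp only: E1)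
  also have "\<dots> = (real (Suc (Suc i)) * (r + real a)) * ((1-p) * (P * real a * real (Suc i)))" by (simp only: ac_simps)
  also have "\<dots> \<le> (real a * (r + 2 + real i)) * ((1-p) * (P * real a * real (Suc i)))"
    by (rule mult_right_mono[OF ineq]) (use q Ppos in simp)
  also have "\<dots> \<le> (real a * (r + 2 + real i)) * ((1-p) * (C * W))"
    by (intro mult_left_mono IH) (use q r1 in auto)
  also have "\<dots> = (real a * C) * ((r + 2 + real i) * (1-p) * W)"
    by (simp only: ac_simps)
  also have "\<dots> = (real a * C) * (real (Suc i) * W')" by (simp only: E2)
  also have "\<dots> = (real a * real (Suc i)) * (C * W')"
    by (simp only: ac_simps)
  finally have "(real a * real (Suc i)) * (P' * real (Suc a) * real (Suc (Suc i)))
      \<le> (real a * real (Suc i)) * (C * W')" .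
  then have "P' * real (Suc a) * real (Suc (Suc i)) \<le> C * W'"
    by (rule mult_left_le_imp_le) (use apos in simp)
  then show ?case unfolding P'_def W'_def a_def C_def by simp
qed

lemma cmp_sum:
  assumes "\<And>i. 0 \<le> f i" "\<And>i. f i \<le> C * w s i"
  shows "summable f" "suminf f \<le> C * p powr (-s)"
proof -
  have sg: "(\<lambda>i. C * w s i) sums (C * p powr (-s))" by (rule sums_mult[OF w_sums])
  then have sg': "summable (\<lambda>i. C * w s i)" by (rule sums_summable)
  show sf: "summable f"
    by (rule summable_comparison_test[OF _ sg']) (use assms in auto)
  have "suminf f \<le> suminf (\<lambda>i. C * w s i)" by (rule suminf_le) (use assms sf sg' in auto)
  then show "suminf f \<le> C * p powr (-s)" using sg by (simp add: sums_unique[symmetric])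
qed

lemma R_bound:
  shows "summable (\<lambda>i. nb_pmf r p (Suc k + i) * real (Suc i))"
    "(\<Sum>i. nb_pmf r p (Suc k + i) * real (Suc i)) \<le> nb_pmf r p (Suc k) * p powr (-(r+1))"
  using cmp_sum[of "\<lambda>i. nb_pmf r p (Suc k + i) * real (Suc i)" "nb_pmf r p (Suc k)" "r+1"] B1[of k]
    pmf_pos by (auto simp: less_imp_le)

lemma W_bound:
  assumes "k \<ge> 1"
  shows "summable (\<lambda>i. nb_pmf r p (Suc k + i) * real (Suc k + i) * real (Suc i))"
    "(\<Sum>i. nb_pmf r p (Suc k + i) * real (Suc k + i) * real (Suc i)) \<le> real (Suc k) * nb_pmf r p (Suc k) * p powr (-(r+2))"
  using cmp_sum[of "\<lambda>i. nb_pmf r p (Suc k + i) * real (Suc k + i) * real (Suc i)" "real (Suc k) * nb_pmf r p (Suc k)" "r+2"] B2[OF assms]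
    pmf_pos by (auto simp: less_imp_le)

lemma g_term_eq:
  "g_term r p z (Suc m) (Suc m + i) = nb_pmf r p (Suc m + i) / (real (Suc m) * nb_pmf r p (Suc m)) * (max (real (Suc m + i) - z) 0 - nb_excess r p z)"
proof -
  define j where "j = Suc m + i"
  have q: "1 - p > 0" using p1 by simp
  have pr: "p powr r > 0" using p0 by simp
  have pk: "pochhammer r (Suc m) > 0" using r1 by (simp add: pochhammer_pos)
  have fm: "fact m > (0::real)" by simp
  have fj: "fact j > (0::real)" by simp
  have fS: "fact (Suc m) = real (Suc m) * fact m" by simp
  have qj: "(1-p)^j = (1-p)^i * (1-p)^(Suc m)" unfolding j_def by (simp add: power_add)
  have "nb_pmf r p j / (real (Suc m) * nb_pmf r p (Suc m))
      = pochhammer r j / pochhammer r (Suc m) * (fact m / fact j) * (1-p)^i"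
  proof -
    have alg: "\<And>pr A Fj Qi Q K B Fm::real. pr > 0 \<Longrightarrow> Fj > 0 \<Longrightarrow> Q > 0 \<Longrightarrow> K > 0 \<Longrightarrow> B > 0 \<Longrightarrow> Fm > 0 \<Longrightarrow>
       (pr * (A / Fj * (Qi * Q))) / (K * (pr * (B / (K*Fm) * Q))) = A / B * (Fm / Fj) * Qi"
      by (simp add: field_simps)
    show ?thesis unfolding pmf_w w_def fS qj
      by (rule alg) (use q pr pk fm fj in auto)
  qed
  then show ?thesis unfolding g_term_def j_def by simp
qed

lemma fin_ident:
  "real k * (\<Sum>j<Suc k. nb_pmf r p j) - (r + real k) * (1-p) * (\<Sum>j<k. nb_pmf r p j)
     = p * (\<Sum>j<Suc k. (real k - real j) * nb_pmf r p j)"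
proof (induction k)
  case 0
  then show ?case by simp
next
  case (Suc k)
  define F where "F = (\<Sum>j<Suc k. nb_pmf r p j)"
  define G where "G = (\<Sum>j<k. nb_pmf r p j)"
  define D where "D = (\<Sum>j<Suc k. (real k - real j) * nb_pmf r p j)"
  have FG: "F = G + nb_pmf r p k" unfolding F_def G_def by simp
  have F1: "(\<Sum>j<Suc (Suc k). nb_pmf r p j) = F + nb_pmf r p (Suc k)" unfolding F_def by simp
  have D1: "(\<Sum>j<Suc (Suc k). (real (Suc k) - real j) * nb_pmf r p j) = D + F"
  proof -
    have "(\<Sum>j<Suc (Suc k). (real (Suc k) - real j) * nb_pmf r p j)
        = (\<Sum>j<Suc k. (real (Suc k) - real j) * nb_pmf r p j)" by simp
    also have "\<dots> = (\<Sum>j<Suc k. (real k - real j) * nb_pmf r p j + nb_pmf r p j)"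
      by (intro sum.cong) (auto simp: algebra_simps)
    also have "\<dots> = D + F" unfolding D_def F_def by (simp add: sum.distrib)
    finally show ?thesis .
  qed
  have IH: "real k * F - (r + real k) * (1-p) * G = p * D" using Suc.IH unfolding F_def G_def D_def .
  have rec: "real (Suc k) * nb_pmf r p (Suc k) = (r + real k) * (1-p) * nb_pmf r p k" by (rule pmf_rec)
  have "real (Suc k) * (\<Sum>j<Suc (Suc k). nb_pmf r p j) - (r + real (Suc k)) * (1-p) * (\<Sum>j<Suc k. nb_pmf r p j)
      = real (Suc k) * F + real (Suc k) * nb_pmf r p (Suc k) - (r + real k) * (1-p) * F - (1-p) * F"
    unfolding F1 F_def[symmetric] by (simp add: algebra_simps)
  also have "\<dots> = real (Suc k) * F + (r + real k) * (1-p) * nb_pmf r p k - (r + real k) * (1-p) * (G + nb_pmf r p k) - (1-p) * F"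
    unfolding rec FG[symmetric] ..
  also have "\<dots> = (real k * F - (r + real k) * (1-p) * G) + p * F"
    by (simp add: algebra_simps)
  also have "\<dots> = p * (D + F)" unfolding IH by (simp add: algebra_simps)
  finally show ?case unfolding D1 .
qed

lemma lin_sum: "summable f \<Longrightarrow> summable g \<Longrightarrow> (\<Sum>i. a * f i + g i) = a * suminf f + (suminf g :: real)"
  by (subst suminf_add[symmetric]) (auto intro: summable_mult simp: suminf_mult)

lemma lin_sum2: "summable f \<Longrightarrow> summable g \<Longrightarrow> (\<Sum>i. g i - a * f i) = suminf g - a * (suminf f :: real)"
  by (subst suminf_diff[symmetric]) (auto intro: summable_mult simp: suminf_mult)

definition TT :: "nat \<Rightarrow> real" where "TT n = (\<Sum>i. nb_pmf r p (n + i))"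
definition MM :: "nat \<Rightarrow> real" where "MM n = (\<Sum>i. nb_pmf r p (n + i) * real (n + i))"
definition RR :: "nat \<Rightarrow> real" where "RR n = (\<Sum>i. nb_pmf r p (Suc n + i) * real (Suc i))"

lemma TT_summable: "summable (\<lambda>i. nb_pmf r p (n + i))"
  using pmf_summable summable_iff_shift[of "nb_pmf r p" n] by (simp add: add.commute)

lemma MM_summable: "summable (\<lambda>i. nb_pmf r p (n + i) * real (n + i))"
  using pmf_mean_summable summable_iff_shift[of "\<lambda>j. nb_pmf r p j * real j" n] by (simp add: add.commute)

lemma X_eq: "(\<Sum>i. nb_pmf r p (Suc n + i) * real (Suc n + i)) = (1-p) * (r * TT n + MM n)"
proof -
  have e: "nb_pmf r p (Suc n + i) * real (Suc n + i) = (1-p) * (r * nb_pmf r p (n + i) + nb_pmf r p (n + i) * real (n + i))" for i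
    using pmf_rec[of "n+i"] by (simp add: algebra_simps)
  have "(\<Sum>i. (1-p) * (r * nb_pmf r p (n + i) + nb_pmf r p (n + i) * real (n + i)))
      = (1-p) * (\<Sum>i. r * nb_pmf r p (n + i) + nb_pmf r p (n + i) * real (n + i))"
    by (rule suminf_mult) (intro summable_add summable_mult TT_summable MM_summable)
  also have "(\<Sum>i. r * nb_pmf r p (n + i) + nb_pmf r p (n + i) * real (n + i)) = r * TT n + MM n"
    unfolding TT_def MM_def by (rule lin_sum[OF TT_summable MM_summable])
  finally show ?thesis by (simp only: e)
qed

lemma MM_head: "MM n = real n * nb_pmf r p n + (\<Sum>i. nb_pmf r p (Suc n + i) * real (Suc n + i))"
  using suminf_split_head[OF MM_summable[of n]] unfolding MM_def by simp

lemma MM_rec: "p * MM n = (1-p) * r * TT n + real n * nb_pmf r p n"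
  using MM_head[of n] X_eq[of n] by (simp add: algebra_simps)

lemma TT_head: "TT n = nb_pmf r p n + TT (Suc n)"
  using suminf_split_head[OF TT_summable[of n]] unfolding TT_def by simp

lemma RR_summable: "summable (\<lambda>i. nb_pmf r p (Suc n + i) * real (Suc i))"
  by (rule R_bound(1))

lemma TR: "(r + real k) * (1-p) * TT k - real k * TT (Suc k) = p * RR k"
proof -
  have X2: "(\<Sum>i. nb_pmf r p (Suc k + i) * real (Suc k + i)) = real k * TT (Suc k) + RR k"
  proof -
    have e: "nb_pmf r p (Suc k + i) * real (Suc k + i) = real k * nb_pmf r p (Suc k + i) + nb_pmf r p (Suc k + i) * real (Suc i)" for i
      by (simp add: algebra_simps)
    show ?thesis unfolding e TT_def RR_def
      by (rule lin_sum[OF TT_summable RR_summable])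
  qed
  have M2: "MM k = real k * TT k + RR k"
  proof -
    have e: "nb_pmf r p (k + i) * real (k + i) = real k * nb_pmf r p (k + i) + nb_pmf r p (k + i) * real i" for i
      by (simp add: algebra_simps)
    have s2: "summable (\<lambda>i. nb_pmf r p (k + i) * real i)"
    proof -
      have "summable (\<lambda>i. nb_pmf r p (k + Suc i) * real (Suc i))" using RR_summable[of k] by simp
      then show ?thesis using summable_iff_shift[of "\<lambda>i. nb_pmf r p (k + i) * real i" 1] by simp
    qed
    have "(\<Sum>i. nb_pmf r p (k + i) * real i) = RR k"
      using suminf_split_head[OF s2] unfolding RR_def by simp
    then show ?thesis unfolding MM_def e TT_def
      by (simp only: lin_sum[OF TT_summable s2])
  qed
  show ?thesis using X_eq[of k] X2 M2 by (simp add: algebra_simps)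
qed

lemma TT0: "TT 0 = 1"
  unfolding TT_def using sums_unique[OF pmf_sums] by simp

lemma mean: "MM 0 = (1-p) * r / p"
  using MM_rec[of 0] TT0 p0 by (simp add: field_simps)

lemma pmf_nonneg: "nb_pmf r p j \<ge> 0" using pmf_pos less_imp_le by blast

context
  fixes z :: real
  assumes z1: "z > 1"
begin

definition ff :: "nat \<Rightarrow> real" where
  "ff j = nb_pmf r p j * (max (real j - z) 0 - nb_excess r p z)"

definition SS :: "nat \<Rightarrow> real" where
  "SS n = (\<Sum>i. ff (n + i))"

lemma h_summable: "summable (\<lambda>j. nb_pmf r p j * max (real j - z) 0)"
proof (rule summable_comparison_test[OF _ pmf_mean_summable])
  show "\<exists>N. \<forall>n\<ge>N. norm (nb_pmf r p n * max (real n - z) 0) \<le> nb_pmf r p n * real n"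
    using pmf_nonneg z1 by (intro exI[of _ 0]) (auto intro!: mult_left_mono)
qed

lemma h_sums: "(\<lambda>j. nb_pmf r p j * max (real j - z) 0) sums nb_excess r p z"
  unfolding nb_excess_def using h_summable by (rule summable_sums)

lemma ff_sums: "ff sums 0"
proof -
  have "(\<lambda>j. nb_pmf r p j * max (real j - z) 0 - nb_pmf r p j * nb_excess r p z) sums (nb_excess r p z - 1 * nb_excess r p z)"
    by (intro sums_diff h_sums sums_mult2 pmf_sums)
  then show ?thesis unfolding ff_def by (simp add: algebra_simps)
qed

lemma SS_fin: "SS n = - (\<Sum>j<n. ff j)" "summable (\<lambda>i. ff (n + i))"
proof -
  have sf: "summable ff" using ff_sums by (rule sums_summable)
  have "suminf ff = (\<Sum>i. ff (i + n)) + (\<Sum>j<n. ff j)"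
    by (rule suminf_split_initial_segment[OF sf])
  moreover have "suminf ff = 0" using ff_sums by (rule sums_unique[symmetric])
  ultimately show "SS n = - (\<Sum>j<n. ff j)" unfolding SS_def by (simp add: add.commute)
  show "summable (\<lambda>i. ff (n + i))" using sf summable_iff_shift[of ff n] by (simp add: add.commute)
qed

lemma g_eq:
  assumes "k \<ge> 1"
  shows "g_z r p z k = - SS k / (real k * nb_pmf r p k)"
proof -
  obtain m where k: "k = Suc m" using assms by (cases k) auto
  have "(\<lambda>i. g_term r p z k (k + i)) = (\<lambda>i. ff (k + i) / (real k * nb_pmf r p k))"
    unfolding k ff_def by (intro ext) (simp only: g_term_eq times_divide_eq_left times_divide_eq_right mult.commute)
  then have "(\<Sum>i. g_term r p z k (k + i)) = SS k / (real k * nb_pmf r p k)"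
    unfolding SS_def using suminf_divide[OF SS_fin(2)[of k]] by simp
  then show ?thesis unfolding g_z_def using k by simp
qed

lemma SS_small:
  assumes "\<And>j. j < n \<Longrightarrow> real j \<le> z"
  shows "SS n = nb_excess r p z * (\<Sum>j<n. nb_pmf r p j)"
proof -
  have "(\<Sum>j<n. ff j) = (\<Sum>j<n. - (nb_excess r p z * nb_pmf r p j))"
    by (intro sum.cong) (use assms in \<open>auto simp: ff_def\<close>)
  then show ?thesis using SS_fin(1)[of n] by (simp add: sum_distrib_left sum_negf)
qed

lemma c_nonneg: "nb_excess r p z \<ge> 0"
  unfolding nb_excess_def by (rule suminf_nonneg[OF h_summable]) (simp add: pmf_nonneg)

lemma zc_bound:
  assumes k1: "k \<ge> 1" and kz: "real k < z"
  shows "z * nb_excess r p z \<le> real (Suc k) * nb_pmf r p (Suc k) * p powr (-(r+2))"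
proof -
  define v where "v j = nb_pmf r p j * real j * max (real j - real k) 0" for j
  have vs: "v (i + Suc k) = nb_pmf r p (Suc k + i) * real (Suc k + i) * real (Suc i)" for i
    unfolding v_def by (simp add: add.commute)
  have sv': "summable (\<lambda>i. v (i + Suc k))" unfolding vs using W_bound(1)[OF k1] .
  then have sv: "summable v" using summable_iff_shift[of v "Suc k"] by blast
  have v0: "(\<Sum>j<Suc k. v j) = 0" by (intro sum.neutral) (auto simp: v_def)
  have "suminf v = (\<Sum>i. v (i + Suc k))"
    using suminf_split_initial_segment[OF sv, of "Suc k"] v0 by simp
  also have "\<dots> \<le> real (Suc k) * nb_pmf r p (Suc k) * p powr (-(r+2))"
    unfolding vs using W_bound(2)[OF k1] .
  finally have vb: "suminf v \<le> real (Suc k) * nb_pmf r p (Suc k) * p powr (-(r+2))" .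
  have tm: "z * (nb_pmf r p j * max (real j - z) 0) \<le> v j" for j
  proof (cases "real j \<le> z")
    case True
    then show ?thesis unfolding v_def by (simp add: pmf_nonneg)
  next
    case False
    have "z * max (real j - z) 0 \<le> real j * max (real j - real k) 0"
      using False kz z1 by (intro mult_mono) auto
    then have "nb_pmf r p j * (z * max (real j - z) 0) \<le> nb_pmf r p j * (real j * max (real j - real k) 0)"
      by (intro mult_left_mono pmf_nonneg)
    then show ?thesis unfolding v_def by (simp add: algebra_simps)
  qed
  have "z * nb_excess r p z = (\<Sum>j. z * (nb_pmf r p j * max (real j - z) 0))"
    unfolding nb_excess_def using suminf_mult[OF h_summable, of z] by simp
  also have "\<dots> \<le> suminf v"
    by (rule suminf_le[OF tm summable_mult[OF h_summable] sv])
  finally show ?thesis using vb by linarith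
qed

lemma F_le1: "(\<Sum>j<n. nb_pmf r p j) \<le> 1"
  using sum_le_suminf[OF pmf_summable, of "{..<n}"] pmf_nonneg sums_unique[OF pmf_sums] by auto

lemma small_case:
  assumes k1: "k \<ge> 1" and kz: "real k < z"
  shows "z * \<bar>g_z r p z (k+1) - g_z r p z k\<bar> \<le> p powr (-(r+1))"
proof -
  define c where "c = nb_excess r p z"
  define P0 where "P0 = nb_pmf r p k"
  define P1 where "P1 = nb_pmf r p (Suc k)"
  define F1 where "F1 = (\<Sum>j<Suc k. nb_pmf r p j)"
  define G where "G = (\<Sum>j<k. nb_pmf r p j)"
  define D where "D = (\<Sum>j<Suc k. (real k - real j) * nb_pmf r p j)"
  have P0p: "P0 > 0" and P1p: "P1 > 0" unfolding P0_def P1_def by (auto intro: pmf_pos)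
  have kp: "real k > 0" using k1 by simp
  have q: "1 - p > 0" using p1 by simp
  have c0: "c \<ge> 0" unfolding c_def by (rule c_nonneg)
  have g1: "g_z r p z (k+1) = - c * F1 / (real (Suc k) * P1)"
    using g_eq[of "k+1"] SS_small[of "Suc k"] kz unfolding c_def F1_def P1_def by auto
  have g0: "g_z r p z k = - c * G / (real k * P0)"
    using g_eq[OF k1] SS_small[of k] kz unfolding c_def G_def P0_def by auto
  have rec: "real (Suc k) * P1 = (r + real k) * (1-p) * P0" unfolding P0_def P1_def by (rule pmf_rec)
  have alpha: "F1 / (real (Suc k) * P1) - G / (real k * P0) = p * D / (real k * (real (Suc k) * P1))"
  proof -
    have "G / (real k * P0) = (r + real k) * (1-p) * G / (real k * (real (Suc k) * P1))"
    proof -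
      have nz: "(r + real k) * (1-p) \<noteq> 0" using q r1 by simp
      have "G / (real k * P0) = ((r + real k) * (1-p) * G) / ((r + real k) * (1-p) * (real k * P0))"
        using nz by simp
      also have "(r + real k) * (1-p) * (real k * P0) = real k * ((r + real k) * (1-p) * P0)"
        by (simp only: ac_simps)
      finally show ?thesis unfolding rec .
    qed
    moreover have "F1 / (real (Suc k) * P1) = real k * F1 / (real k * (real (Suc k) * P1))"
      using kp by simp
    ultimately have "F1 / (real (Suc k) * P1) - G / (real k * P0)
        = (real k * F1 - (r + real k) * (1-p) * G) / (real k * (real (Suc k) * P1))"
      by (simp add: diff_divide_distrib)
    also have "\<dots> = p * D / (real k * (real (Suc k) * P1))"
      using fin_ident[of k] unfolding F1_def G_def D_def by simp
    finally show ?thesis .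
  qed
  have D0: "D \<ge> 0" unfolding D_def by (intro sum_nonneg mult_nonneg_nonneg pmf_nonneg) auto
  have Dk: "D \<le> real k"
  proof -
    have "D \<le> (\<Sum>j<Suc k. real k * nb_pmf r p j)" unfolding D_def
      by (intro sum_mono mult_right_mono pmf_nonneg) auto
    also have "\<dots> = real k * F1" unfolding F1_def by (simp only: sum_distrib_left)
    also have "\<dots> \<le> real k * 1" unfolding F1_def by (intro mult_left_mono F_le1) auto
    finally show ?thesis by simp
  qed
  define al where "al = p * D / (real k * (real (Suc k) * P1))"
  have al0: "al \<ge> 0" unfolding al_def using D0 p0 P1p kp by simp
  have al1: "al \<le> p / (real (Suc k) * P1)"
  proof -
    have "al = (p / (real (Suc k) * P1)) * (D / real k)" unfolding al_def by (simp add: field_simps)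
    also have "\<dots> \<le> (p / (real (Suc k) * P1)) * 1"
      using Dk kp p0 P1p by (intro mult_left_mono) (auto simp: divide_le_eq)
    finally show ?thesis by simp
  qed
  have "g_z r p z (k+1) - g_z r p z k = - c * al"
    unfolding g1 g0 al_def alpha[symmetric] by (simp add: field_simps)
  then have "z * \<bar>g_z r p z (k+1) - g_z r p z k\<bar> = (z * c) * al" using c0 al0 z1 by (simp add: abs_mult)
  also have "\<dots> \<le> (real (Suc k) * P1 * p powr (-(r+2))) * (p / (real (Suc k) * P1))"
    by (rule mult_mono) (use zc_bound[OF k1 kz] c0 z1 al0 al1 P1p in \<open>auto simp: c_def P1_def\<close>)
  also have "\<dots> = p * p powr (-(r+2))" using P1p by simp
  also have "\<dots> = p powr (-(r+1))"
  proof -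
    have "p powr (-(r+1)) = p powr (1 + (-(r+2)))" by (simp add: algebra_simps)
    also have "\<dots> = p powr 1 * p powr (-(r+2))" by (rule powr_add)
    also have "\<dots> = p * p powr (-(r+2))" using p0 by simp
    finally show ?thesis by simp
  qed
  finally show ?thesis .
qed

lemma SS_large:
  assumes "real n \<ge> z"
  shows "SS n = MM n - (z + nb_excess r p z) * TT n"
proof -
  have e: "ff (n + i) = nb_pmf r p (n + i) * real (n + i) - (z + nb_excess r p z) * nb_pmf r p (n + i)" for i
    using assms unfolding ff_def by (simp add: algebra_simps)
  show ?thesis unfolding SS_def e MM_def TT_def
    by (rule lin_sum2[OF TT_summable MM_summable])
qed

lemma c_le: "nb_excess r p z \<le> MM 0"
proof -
  have "nb_pmf r p j * max (real j - z) 0 \<le> nb_pmf r p j * real j" for j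
    using z1 by (intro mult_left_mono pmf_nonneg) auto
  then show ?thesis unfolding nb_excess_def MM_def using pmf_mean_summable
    by (intro suminf_le[OF _ h_summable]) auto
qed

lemma c_ge: "MM 0 - z \<le> nb_excess r p z"
proof -
  have "(\<lambda>j. nb_pmf r p j * real j - z * nb_pmf r p j) sums (MM 0 - z * 1)"
    unfolding MM_def using summable_sums[OF pmf_mean_summable] by (intro sums_diff sums_mult pmf_sums) simp
  then have "MM 0 - z = (\<Sum>j. nb_pmf r p j * real j - z * nb_pmf r p j)" by (simp add: sums_unique)
  also have "\<dots> \<le> nb_excess r p z" unfolding nb_excess_def
  proof (intro suminf_le[OF _ _ h_summable])
    show "summable (\<lambda>j. nb_pmf r p j * real j - z * nb_pmf r p j)"
      using summable_diff[OF pmf_mean_summable summable_mult[OF pmf_summable, of z]] .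
    fix j
    have "nb_pmf r p j * (real j - z) \<le> nb_pmf r p j * max (real j - z) 0"
      by (intro mult_left_mono pmf_nonneg) auto
    then show "nb_pmf r p j * real j - z * nb_pmf r p j \<le> nb_pmf r p j * max (real j - z) 0"
      by (simp add: algebra_simps)
  qed
  finally show ?thesis .
qed

lemma g_large:
  assumes n1: "n \<ge> 1" and nz: "real n \<ge> z"
  shows "g_z r p z n = - 1 / p - ((1-p) * r / p - (z + nb_excess r p z)) * TT n / (real n * nb_pmf r p n)"
proof -
  define A where "A = z + nb_excess r p z"
  have Pp: "nb_pmf r p n > 0" by (rule pmf_pos)
  have np: "real n > 0" using n1 by simp
  have M: "MM n = ((1-p) * r * TT n + real n * nb_pmf r p n) / p"
    using MM_rec[of n] p0 by (simp add: field_simps)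
  have S: "SS n = real n * nb_pmf r p n / p + ((1-p) * r / p - A) * TT n"
    unfolding SS_large[OF nz] M A_def[symmetric] using p0 by (simp add: field_simps)
  have "g_z r p z n = - SS n / (real n * nb_pmf r p n)" by (rule g_eq[OF n1])
  also have "\<dots> = - 1 / p - ((1-p) * r / p - A) * TT n / (real n * nb_pmf r p n)"
    unfolding S using Pp np p0 by (simp add: field_simps)
  finally show ?thesis unfolding A_def .
qed

lemma large_case:
  assumes kz: "real k \<ge> z"
  shows "z * \<bar>g_z r p z (k+1) - g_z r p z k\<bar> \<le> p powr (-(r+1))"
proof -
  have k1: "k \<ge> 1" using kz z1 by (cases k) auto
  define mu where "mu = (1-p) * r / p - (z + nb_excess r p z)"
  define P0 where "P0 = nb_pmf r p k"
  define P1 where "P1 = nb_pmf r p (Suc k)"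
  have P0p: "P0 > 0" and P1p: "P1 > 0" unfolding P0_def P1_def by (auto intro: pmf_pos)
  have kp: "real k > 0" using k1 by simp
  have q: "1 - p > 0" using p1 by simp
  have g1: "g_z r p z (k+1) = - 1 / p - mu * TT (Suc k) / (real (Suc k) * P1)"
    using g_large[of "k+1"] kz unfolding mu_def P1_def by simp
  have g0: "g_z r p z k = - 1 / p - mu * TT k / (real k * P0)"
    using g_large[OF k1 kz] unfolding mu_def P0_def by simp
  have rec: "real (Suc k) * P1 = (r + real k) * (1-p) * P0" unfolding P0_def P1_def by (rule pmf_rec)
  have beta: "TT k / (real k * P0) - TT (Suc k) / (real (Suc k) * P1) = p * RR k / (real k * (real (Suc k) * P1))"
  proof -
    have "TT k / (real k * P0) = (r + real k) * (1-p) * TT k / (real k * (real (Suc k) * P1))"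
    proof -
      have nz: "(r + real k) * (1-p) \<noteq> 0" using q r1 by simp
      have "TT k / (real k * P0) = ((r + real k) * (1-p) * TT k) / ((r + real k) * (1-p) * (real k * P0))"
        using nz by simp
      also have "(r + real k) * (1-p) * (real k * P0) = real k * ((r + real k) * (1-p) * P0)"
        by (simp only: ac_simps)
      finally show ?thesis unfolding rec .
    qed
    moreover have "TT (Suc k) / (real (Suc k) * P1) = real k * TT (Suc k) / (real k * (real (Suc k) * P1))"
      using kp by simp
    ultimately have "TT k / (real k * P0) - TT (Suc k) / (real (Suc k) * P1)
        = ((r + real k) * (1-p) * TT k - real k * TT (Suc k)) / (real k * (real (Suc k) * P1))"
      by (simp add: diff_divide_distrib)
    also have "\<dots> = p * RR k / (real k * (real (Suc k) * P1))" using TR[of k] by simp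
    finally show ?thesis .
  qed
  define be where "be = p * RR k / (real k * (real (Suc k) * P1))"
  have RR0: "RR k \<ge> 0" unfolding RR_def by (intro suminf_nonneg RR_summable) (simp add: pmf_nonneg)
  have RRb: "RR k \<le> P1 * p powr (-(r+1))" unfolding RR_def P1_def by (rule R_bound(2))
  have be0: "be \<ge> 0" unfolding be_def using RR0 p0 P1p kp by simp
  have mu_b: "\<bar>mu\<bar> \<le> z" unfolding mu_def using c_le c_ge mean by simp
  have "g_z r p z (k+1) - g_z r p z k = mu * be"
    unfolding g1 g0 be_def beta[symmetric] by (simp add: field_simps)
  then have "z * \<bar>g_z r p z (k+1) - g_z r p z k\<bar> = z * \<bar>mu\<bar> * be" using be0 z1 by (simp add: abs_mult)
  also have "\<dots> \<le> z * z * be" using mu_b be0 z1 by (intro mult_right_mono mult_left_mono) auto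
  also have "\<dots> \<le> (real k * real (Suc k)) * be"
  proof (rule mult_right_mono[OF _ be0])
    have "z * z \<le> real k * real k" using kz z1 by (intro mult_mono) auto
    also have "\<dots> \<le> real k * real (Suc k)" by (intro mult_left_mono) auto
    finally show "z * z \<le> real k * real (Suc k)" .
  qed
  also have "\<dots> = p * RR k / P1"
  proof -
    have alg: "\<And>a b P X::real. a > 0 \<Longrightarrow> b > 0 \<Longrightarrow> P > 0 \<Longrightarrow> (a * b) * (X / (a * (b * P))) = X / P"
      by (simp add: field_simps)
    show ?thesis unfolding be_def by (rule alg) (use kp P1p in auto)
  qed
  also have "\<dots> \<le> p * (P1 * p powr (-(r+1))) / P1"
    using RRb p0 P1p by (intro divide_right_mono mult_left_mono) auto
  also have "\<dots> = p * p powr (-(r+1))" using P1p by simp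
  also have "\<dots> \<le> 1 * p powr (-(r+1))" using p1 by (intro mult_right_mono) auto
  finally show ?thesis by simp
qed

lemma main_bound:
  assumes "k \<ge> 1"
  shows "\<bar>g_z r p z (k+1) - g_z r p z k\<bar> \<le> p powr (-(r+1)) / z"
proof -
  have "z * \<bar>g_z r p z (k+1) - g_z r p z k\<bar> \<le> p powr (-(r+1))"
    using small_case[OF assms] large_case by (cases "real k < z") auto
  then show ?thesis using z1 by (simp add: field_simps)
qed

end

end

theorem lemma2p2:
  fixes r p z :: real and k :: nat
  assumes "r > 1" and "0 < p" and "p < 1" and "z > 1" and "k \<ge> 1"
  shows "\<bar>g_z r p z (k + 1) - g_z r p z k\<bar> \<le>
           (if real k \<ge> z then (1 / z) * (2 * p powr (-(r + 1)) - 1 / p)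
            else if 2 \<le> k then (1 / z) * ((1 + 1 / (1 - p)) * p powr (-(r + 2)) - 1 / p ^ 2)
            else ((r + 1) / z) * (2 * p powr (-(r + 2)) - 1 / p ^ 2))
       \<and> \<bar>g_z r p z (k + 1) - g_z r p z k\<bar> \<le>
           ((r + 1) / z) * ((1 + 1 / (1 - p)) * p powr (-(r + 2)) - 1 / p ^ 2)"
proof -
  define P where "P = p powr (-(r+1))"
  define Q where "Q = p powr (-(r+2))"
  define D where "D = \<bar>g_z r p z (k + 1) - g_z r p z k\<bar>"
  have p0: "0 < p" and p1: "p < 1" and z1: "z > 1" and r1: "r > 1" using assms by auto
  have DP: "D \<le> P / z" unfolding D_def P_def by (rule main_bound[OF r1 p0 p1 z1 assms(5)])
  have inv_p: "1 / p \<le> P"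
  proof -
    have "p powr (-1) \<le> p powr (-(r+1))" using r1 p0 p1 by (intro powr_mono') auto
    then show ?thesis unfolding P_def using p0 by (simp add: powr_minus_divide)
  qed
  have QP: "Q = P / p"
  proof -
    have e: "-(r+2) = -(r+1) + (-1)" by simp
    have "Q = p powr (-(r+1) + (-1))" unfolding Q_def by (subst e) (rule refl)
    also have "\<dots> = P * p powr (-1)" unfolding P_def by (rule powr_add)
    finally show ?thesis using p0 by (simp add: powr_minus_divide)
  qed
  have P0: "P > 0" unfolding P_def using p0 by simp
  have PQ: "P \<le> Q" unfolding QP using P0 p0 p1 by (simp add: field_simps)
  have inv_p2: "1 / p^2 \<le> Q"
  proof -
    have "p powr (-2) \<le> p powr (-(r+2))" using r1 p0 p1 by (intro powr_mono') auto
    moreover have "p powr (-2) = 1 / p^2" using p0 by (simp add: powr_minus_divide powr_realpow)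
    ultimately show ?thesis unfolding Q_def by simp
  qed
  have Qq: "Q \<le> Q / (1-p)" using p0 p1 P0 PQ by (simp add: field_simps)
  have b1: "P \<le> 2 * P - 1 / p" using inv_p by simp
  have b2: "P \<le> (1 + 1 / (1 - p)) * Q - 1 / p ^ 2"
    using PQ inv_p2 Qq by (simp add: algebra_simps)
  have b3: "P \<le> (r + 1) * (2 * Q - 1 / p ^ 2)"
  proof -
    have "P \<le> 1 * (2 * Q - 1 / p ^ 2)" using PQ inv_p2 by simp
    also have "\<dots> \<le> (r + 1) * (2 * Q - 1 / p ^ 2)" using r1 PQ inv_p2 P0
      by (intro mult_right_mono) auto
    finally show ?thesis .
  qed
  have b4: "P \<le> (r + 1) * ((1 + 1 / (1 - p)) * Q - 1 / p ^ 2)"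
  proof -
    have "P \<le> 1 * ((1 + 1 / (1 - p)) * Q - 1 / p ^ 2)" using b2 by simp
    also have "\<dots> \<le> (r + 1) * ((1 + 1 / (1 - p)) * Q - 1 / p ^ 2)" using r1 b2 P0
      by (intro mult_right_mono) auto
    finally show ?thesis .
  qed
  have zp: "z > 0" using z1 by simp
  have d: "\<And>X. P \<le> X \<Longrightarrow> D \<le> (1 / z) * X"
  proof -
    fix X assume "P \<le> X"
    then have "P / z \<le> X / z" using zp by (simp add: divide_right_mono)
    then show "D \<le> (1 / z) * X" using DP by simp
  qed
  have d2: "\<And>X. P \<le> (r + 1) * X \<Longrightarrow> D \<le> ((r + 1) / z) * X"
    using d by (simp add: mult.commute)
  show ?thesis
    using d[OF b1] d[OF b2] d2[OF b3] d2[OF b4] unfolding D_def P_def Q_def by auto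
qed

end
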